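(* Let $H$ be the graph consisting of two triangles $uv_1v_2$ and $uw_1w_2$ sharing exactly the vertex $u$. Let $G$ be a graph with $n$ vertices obtained from $H$ by attaching pendant edges (new leaves) to vertices of $H$, such that $a\ge1$ pendant edges are attached to $u$ and the remaining pendant edges are attached to exactly $d$ of the vertices $v_1,v_2,w_1,w_2$, where $1\le d\le 4$. Then $\operatorname{avm}(G)>\operatorname{avm}(R_n(3,3))$.
   Context: $\operatorname{avm}(G)$ is the average of $|M|$ over all maximal matchings $M$ of $G$ (a matching is maximal if not properly contained in another matching). For $n\ge 6$, $R_n(3,3)$ is the graph obtained from $H$ by attaching $n-5$ pendant edges (new leaves) to $v_1$. *)

theory Defs
  imports Complex_Main
begin

text \<open>Graphs are given by their edge sets (sets of 2-element vertex sets).\<close>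

definition matching :: "'a set set \<Rightarrow> 'a set set \<Rightarrow> bool" where
  "matching E M \<longleftrightarrow> M \<subseteq> E \<and> (\<forall>e1\<in>M. \<forall>e2\<in>M. e1 \<noteq> e2 \<longrightarrow> e1 \<inter> e2 = {})"

definition maximal_matching :: "'a set set \<Rightarrow> 'a set set \<Rightarrow> bool" where
  "maximal_matching E M \<longleftrightarrow> matching E M \<and> (\<nexists>M'. matching E M' \<and> M \<subset> M')"

definition avm :: "'a set set \<Rightarrow> real" where
  "avm E = (\<Sum>M\<in>{M. maximal_matching E M}. real (card M)) / real (card {M. maximal_matching E M})"

text \<open>Vertices: Core 0 = u, Core 1 = v1, Core 2 = v2, Core 3 = w1, Core 4 = w2;
  Leaf i j is the j-th pendant leaf attached to Core i.\<close>
datatype vtx = Core nat | Leaf nat nat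

definition H_edges :: "vtx set set" where
  "H_edges = {{Core 0, Core 1}, {Core 0, Core 2}, {Core 1, Core 2},
              {Core 0, Core 3}, {Core 0, Core 4}, {Core 3, Core 4}}"

definition pendant_graph :: "(nat \<Rightarrow> nat) \<Rightarrow> vtx set set" where
  "pendant_graph k = H_edges \<union> {{Core i, Leaf i j} | i j. i < 5 \<and> j < k i}"

definition R33 :: "nat \<Rightarrow> vtx set set" where
  "R33 n = pendant_graph (\<lambda>i. if i = 1 then n - 5 else 0)"

end

theory Submission
  imports Defs "HOL-Library.FuncSet"
begin

lemma maximal_iff:
  assumes ne: "\<And>e. e \<in> E \<Longrightarrow> e \<noteq> {}"
  shows "maximal_matching E M \<longleftrightarrow> matching E M \<and> (\<forall>e\<in>E. e \<notin> M \<longrightarrow> (\<exists>f\<in>M. f \<inter> e \<noteq> {}))"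
proof
  assume mm: "maximal_matching E M"
  hence m: "matching E M" and nm: "\<nexists>M'. matching E M' \<and> M \<subset> M'"
    by (auto simp: maximal_matching_def)
  show "matching E M \<and> (\<forall>e\<in>E. e \<notin> M \<longrightarrow> (\<exists>f\<in>M. f \<inter> e \<noteq> {}))"
  proof (intro conjI ballI impI m)
    fix e assume e: "e \<in> E" "e \<notin> M"
    show "\<exists>f\<in>M. f \<inter> e \<noteq> {}"
    proof (rule ccontr)
      assume "\<not> ?thesis"
      hence "matching E (insert e M)" using m e unfolding matching_def by blast
      moreover have "M \<subset> insert e M" using e by blast
      ultimately show False using nm by blast
    qed
  qed
next
  assume h: "matching E M \<and> (\<forall>e\<in>E. e \<notin> M \<longrightarrow> (\<exists>f\<in>M. f \<inter> e \<noteq> {}))"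
  show "maximal_matching E M" unfolding maximal_matching_def
  proof (intro conjI notI)
    show "matching E M" using h by blast
  next
    assume "\<exists>M'. matching E M' \<and> M \<subset> M'"
    then obtain M' e where M': "matching E M'" "M \<subset> M'" "e \<in> M'" "e \<notin> M" by blast
    hence "e \<in> E" by (auto simp: matching_def)
    then obtain f where "f \<in> M" "f \<inter> e \<noteq> {}" using h M' by blast
    moreover have "f \<noteq> e" using \<open>f \<in> M\<close> M' by blast
    ultimately show False using M' unfolding matching_def by blast
  qed
qed

definition posv :: "(nat \<Rightarrow> nat) \<Rightarrow> vtx \<Rightarrow> bool" where
  "posv k v \<longleftrightarrow> (\<exists>i. v = Core i \<and> i < 5 \<and> 0 < k i)"
definition valid :: "(nat \<Rightarrow> nat) \<Rightarrow> vtx set set \<Rightarrow> bool" where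
  "valid k N \<longleftrightarrow> (\<forall>e\<in>H_edges. e \<inter> \<Union>N = {} \<longrightarrow> (\<exists>v\<in>e. posv k v))"
definition Aset :: "(nat \<Rightarrow> nat) \<Rightarrow> vtx set set \<Rightarrow> nat set" where
  "Aset k N = {i. i < 5 \<and> Core i \<notin> \<Union>N \<and> 0 < k i}"
definition pend :: "(nat \<Rightarrow> nat) \<Rightarrow> nat set \<Rightarrow> vtx set set" where
  "pend \<sigma> A = (\<lambda>i. {Core i, Leaf i (\<sigma> i)}) ` A"
definition HM :: "vtx set set set" where
  "HM = {N. matching H_edges N}"

lemma Leaf_notin_H: "e \<in> H_edges \<Longrightarrow> Leaf i j \<notin> e"
  by (auto simp: H_edges_def)

lemma pg_ne: "e \<in> pendant_graph k \<Longrightarrow> e \<noteq> {}"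
  by (auto simp: pendant_graph_def H_edges_def)

lemma pg_cases:
  assumes "f \<in> pendant_graph k"
  obtains "f \<in> H_edges" | i j where "f = {Core i, Leaf i j}" "i < 5" "j < k i"
  using assms unfolding pendant_graph_def by blast

lemma char:
  "maximal_matching (pendant_graph k) M \<longleftrightarrow>
   (\<exists>N\<in>HM. valid k N \<and> (\<exists>\<sigma>\<in>Pi\<^sub>E (Aset k N) (\<lambda>i. {..<k i}). M = N \<union> pend \<sigma> (Aset k N)))"
  (is "?L \<longleftrightarrow> ?R")
proof
  assume L: ?L
  have m: "matching (pendant_graph k) M" and mx: "\<forall>e\<in>pendant_graph k. e\<notin>M \<longrightarrow> (\<exists>f\<in>M. f\<inter>e \<noteq> {})"
    using L maximal_iff[of "pendant_graph k" M, OF pg_ne[of _ k]] by auto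
  have sub: "M \<subseteq> pendant_graph k" and dis: "\<And>e1 e2. e1\<in>M \<Longrightarrow> e2\<in>M \<Longrightarrow> e1\<noteq>e2 \<Longrightarrow> e1\<inter>e2={}"
    using m unfolding matching_def by blast+
  define N where "N = M \<inter> H_edges"
  define A where "A = Aset k N"
  have NHM: "N \<in> HM" unfolding HM_def matching_def N_def using dis by auto
  have ex: "\<exists>j. j<k i \<and> {Core i, Leaf i j} \<in> M" if "i\<in>A" for i
  proof -
    from that have i: "i<5" "Core i \<notin> \<Union>N" "0<k i" by (auto simp: A_def Aset_def)
    let ?e = "{Core i, Leaf i 0}"
    have eE: "?e \<in> pendant_graph k" using i by (auto simp: pendant_graph_def)
    show ?thesis
    proof (cases "?e \<in> M")
      case True thus ?thesis using i by auto
    next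
      case False
      then obtain f where f: "f\<in>M" "f\<inter>?e\<noteq>{}" using mx eE by blast
      from f sub have "f \<in> pendant_graph k" by auto
      thus ?thesis
      proof (cases rule: pg_cases)
        case 1
        hence "f \<in> N" using f N_def by auto
        moreover have "Leaf i 0 \<notin> f" using 1 Leaf_notin_H by auto
        ultimately show ?thesis using f i by auto
      next
        case (2 i' j)
        thus ?thesis using f by auto
      qed
    qed
  qed
  define \<sigma> where "\<sigma> = (\<lambda>i. if i\<in>A then (SOME j. j<k i \<and> {Core i, Leaf i j}\<in>M) else undefined)"
  have \<sigma>: "\<sigma> i < k i \<and> {Core i, Leaf i (\<sigma> i)} \<in> M" if "i\<in>A" for i
    using someI_ex[OF ex[OF that]] that \<sigma>_def by auto
  have \<sigma>P: "\<sigma> \<in> Pi\<^sub>E A (\<lambda>i. {..<k i})" using \<sigma> by (auto simp: \<sigma>_def PiE_def extensional_def)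
  have val: "valid k N" unfolding valid_def
  proof (intro ballI impI)
    fix e assume e: "e \<in> H_edges" "e \<inter> \<Union>N = {}"
    have "e \<noteq> {}" using e(1) by (auto simp: H_edges_def)
    hence "e \<notin> M" using e N_def by auto
    moreover have "e \<in> pendant_graph k" using e by (auto simp: pendant_graph_def)
    ultimately obtain f where f: "f\<in>M" "f\<inter>e\<noteq>{}" using mx by blast
    from f sub have "f \<in> pendant_graph k" by auto
    thus "\<exists>v\<in>e. posv k v"
    proof (cases rule: pg_cases)
      case 1
      hence "f \<in> N" using f N_def by auto
      thus ?thesis using f e by auto
    next
      case (2 i j)
      have "Leaf i j \<notin> e" using e Leaf_notin_H by auto
      hence "Core i \<in> e" using f 2 by auto
      thus ?thesis using 2 by (auto simp: posv_def)
    qed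
  qed
  have eq: "M = N \<union> pend \<sigma> A"
  proof
    show "M \<subseteq> N \<union> pend \<sigma> A"
    proof
      fix e assume e: "e \<in> M"
      hence "e \<in> pendant_graph k" using sub by auto
      thus "e \<in> N \<union> pend \<sigma> A"
      proof (cases rule: pg_cases)
        case 1 thus ?thesis using e N_def by auto
      next
        case (2 i j)
        have eH: "e \<notin> H_edges" using 2 Leaf_notin_H by auto
        have "Core i \<notin> \<Union>N"
        proof
          assume "Core i \<in> \<Union>N"
          then obtain f where f: "f \<in> N" "Core i \<in> f" by auto
          hence "f \<in> M" "f \<noteq> e" using eH N_def by auto
          thus False using dis[OF \<open>f\<in>M\<close> e] f 2 by auto
        qed
        hence iA: "i \<in> A" using 2 by (auto simp: A_def Aset_def)
        have "{Core i, Leaf i (\<sigma> i)} = e"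
          using \<sigma>[OF iA] dis[of "{Core i, Leaf i (\<sigma> i)}" e] e 2 by auto
        thus ?thesis using iA by (auto simp: pend_def)
      qed
    qed
  next
    show "N \<union> pend \<sigma> A \<subseteq> M" using \<sigma> N_def by (auto simp: pend_def)
  qed
  show ?R using NHM val \<sigma>P eq A_def by blast
next
  assume ?R
  then obtain N \<sigma> where N: "N \<in> HM" "valid k N" and \<sigma>: "\<sigma> \<in> Pi\<^sub>E (Aset k N) (\<lambda>i. {..<k i})"
    and M: "M = N \<union> pend \<sigma> (Aset k N)" by blast
  have NH: "N \<subseteq> H_edges" and Ndis: "\<And>e1 e2. e1\<in>N \<Longrightarrow> e2\<in>N \<Longrightarrow> e1\<noteq>e2 \<Longrightarrow> e1\<inter>e2={}"
    using N unfolding HM_def matching_def by blast+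
  have pA: "i < 5" "Core i \<notin> \<Union>N" "0 < k i" "\<sigma> i < k i" if "i \<in> Aset k N" for i
    using that \<sigma> by (auto simp: Aset_def PiE_def)
  have m: "matching (pendant_graph k) M" unfolding matching_def
  proof (intro conjI ballI impI)
    show "M \<subseteq> pendant_graph k"
    proof
      fix e assume "e \<in> M"
      hence "e \<in> N \<or> (\<exists>i\<in>Aset k N. e = {Core i, Leaf i (\<sigma> i)})" using M pend_def by auto
      thus "e \<in> pendant_graph k"
      proof
        assume "e \<in> N" thus ?thesis using NH unfolding pendant_graph_def by blast
      next
        assume "\<exists>i\<in>Aset k N. e = {Core i, Leaf i (\<sigma> i)}"
        then obtain i where "i \<in> Aset k N" "e = {Core i, Leaf i (\<sigma> i)}" by blast
        thus ?thesis using pA(1,4)[of i] unfolding pendant_graph_def by blast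
      qed
    qed
  next
    fix e1 e2 assume e: "e1 \<in> M" "e2 \<in> M" "e1 \<noteq> e2"
    show "e1 \<inter> e2 = {}"
    proof (cases "e1 \<in> N")
      case T1: True
      show ?thesis
      proof (cases "e2 \<in> N")
        case True thus ?thesis using T1 Ndis e by blast
      next
        case False
        then obtain i where i: "i \<in> Aset k N" "e2 = {Core i, Leaf i (\<sigma> i)}" using e M pend_def by auto
        have "Leaf i (\<sigma> i) \<notin> e1" using T1 NH Leaf_notin_H by auto
        moreover have "Core i \<notin> e1" using pA(2)[OF i(1)] T1 by auto
        ultimately show ?thesis using i by auto
      qed
    next
      case F1: False
      then obtain i where i: "i \<in> Aset k N" "e1 = {Core i, Leaf i (\<sigma> i)}" using e M pend_def by auto
      show ?thesis
      proof (cases "e2 \<in> N")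
        case T2: True
        have "Leaf i (\<sigma> i) \<notin> e2" using T2 NH Leaf_notin_H by auto
        moreover have "Core i \<notin> e2" using pA(2)[OF i(1)] T2 by auto
        ultimately show ?thesis using i by auto
      next
        case False
        then obtain j where j: "j \<in> Aset k N" "e2 = {Core j, Leaf j (\<sigma> j)}" using e M pend_def by auto
        have "i \<noteq> j" using i j e by auto
        thus ?thesis using i j by auto
      qed
    qed
  qed
  have pin: "{Core i, Leaf i (\<sigma> i)} \<in> M" if "i \<in> Aset k N" for i
    using that M pend_def by auto
  have mx: "\<forall>e\<in>pendant_graph k. e\<notin>M \<longrightarrow> (\<exists>f\<in>M. f\<inter>e \<noteq> {})"
  proof (intro ballI impI)
    fix e assume e: "e \<in> pendant_graph k" "e \<notin> M"
    thus "\<exists>f\<in>M. f\<inter>e \<noteq> {}"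
    proof (cases rule: pg_cases)
      case 1
      show ?thesis
      proof (cases "e \<inter> \<Union>N = {}")
        case True
        then obtain v where v: "v \<in> e" "posv k v" using N(2) 1 unfolding valid_def by blast
        then obtain i where i: "v = Core i" "i < 5" "0 < k i" by (auto simp: posv_def)
        have "Core i \<notin> \<Union>N" using True v i by auto
        hence iA: "i \<in> Aset k N" using i by (auto simp: Aset_def)
        have "{Core i, Leaf i (\<sigma> i)} \<inter> e \<noteq> {}" using v i by auto
        thus ?thesis by (intro bexI[OF _ pin[OF iA]])
      next
        case False
        then obtain f where "f \<in> N" "f \<inter> e \<noteq> {}" by auto
        thus ?thesis using M by auto
      qed
    next
      case (2 i j)
      show ?thesis
      proof (cases "Core i \<in> \<Union>N")
        case True
        then obtain f where "f \<in> N" "Core i \<in> f" by auto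
        thus ?thesis using M 2 by auto
      next
        case False
        hence iA: "i \<in> Aset k N" using 2 by (auto simp: Aset_def)
        have "{Core i, Leaf i (\<sigma> i)} \<inter> e \<noteq> {}" using 2 by auto
        thus ?thesis by (intro bexI[OF _ pin[OF iA]])
      qed
    qed
  qed
  show ?L using maximal_iff[of "pendant_graph k" M, OF pg_ne[of _ k]] m mx by blast
qed


lemma HM_finite: "finite HM"
proof -
  have "HM \<subseteq> Pow H_edges" by (auto simp: HM_def matching_def)
  moreover have "finite H_edges" by (simp add: H_edges_def)
  ultimately show ?thesis by (rule finite_subset[OF _ finite_Pow_iff[THEN iffD2]])
qed

lemma MM_eq: "{M. maximal_matching (pendant_graph k) M} =
   (\<Union>N\<in>{N\<in>HM. valid k N}. (\<lambda>\<sigma>. N \<union> pend \<sigma> (Aset k N)) ` Pi\<^sub>E (Aset k N) (\<lambda>i. {..<k i}))"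
proof (rule set_eqI)
  fix M
  show "M \<in> {M. maximal_matching (pendant_graph k) M} \<longleftrightarrow> M \<in> (\<Union>N\<in>{N\<in>HM. valid k N}. (\<lambda>\<sigma>. N \<union> pend \<sigma> (Aset k N)) ` Pi\<^sub>E (Aset k N) (\<lambda>i. {..<k i}))"
    unfolding mem_Collect_eq char[of k] UN_iff image_iff Bex_def by (rule iffI; elim exE conjE; blast)
qed

lemma Aset_finite: "finite (Aset k N)"
  by (rule finite_subset[of _ "{..<5}"]) (auto simp: Aset_def)

lemma pend_H: "pend \<sigma> A \<inter> H_edges = {}"
  using Leaf_notin_H by (auto simp: pend_def)

lemma HM_sub: "N \<in> HM \<Longrightarrow> N \<subseteq> H_edges"
  by (auto simp: HM_def matching_def)

lemma F_inj: "N \<in> HM \<Longrightarrow> inj_on (\<lambda>\<sigma>. N \<union> pend \<sigma> (Aset k N)) (Pi\<^sub>E (Aset k N) (\<lambda>i. {..<k i}))"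
proof (rule inj_onI)
  fix \<sigma>1 \<sigma>2 assume N: "N \<in> HM" and s: "\<sigma>1 \<in> Pi\<^sub>E (Aset k N) (\<lambda>i. {..<k i})" "\<sigma>2 \<in> Pi\<^sub>E (Aset k N) (\<lambda>i. {..<k i})"
    and eq: "N \<union> pend \<sigma>1 (Aset k N) = N \<union> pend \<sigma>2 (Aset k N)"
  have "pend \<sigma>1 (Aset k N) = pend \<sigma>2 (Aset k N)"
    using eq pend_H[of \<sigma>1 "Aset k N"] pend_H[of \<sigma>2 "Aset k N"] HM_sub[OF N] by blast
  hence pe: "pend \<sigma>1 (Aset k N) = pend \<sigma>2 (Aset k N)" .
  have "\<sigma>1 i = \<sigma>2 i" if "i \<in> Aset k N" for i
  proof -
    have "{Core i, Leaf i (\<sigma>1 i)} \<in> pend \<sigma>2 (Aset k N)" using pe that unfolding pend_def by blast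
    then obtain j where "{Core i, Leaf i (\<sigma>1 i)} = {Core j, Leaf j (\<sigma>2 j)}" unfolding pend_def by blast
    thus ?thesis by (auto simp: doubleton_eq_iff)
  qed
  thus "\<sigma>1 = \<sigma>2" using s by (auto intro!: extensionalityI[of _ "Aset k N"] simp: PiE_def)
qed

lemma sum_MM:
  "(\<Sum>M\<in>{M. maximal_matching (pendant_graph k) M}. g M) =
   (\<Sum>N\<in>{N\<in>HM. valid k N}. \<Sum>\<sigma>\<in>Pi\<^sub>E (Aset k N) (\<lambda>i. {..<k i}). g (N \<union> pend \<sigma> (Aset k N)))"
proof -
  have fin: "finite {N\<in>HM. valid k N}" using HM_finite by auto
  have "(\<Sum>M\<in>{M. maximal_matching (pendant_graph k) M}. g M) =
    (\<Sum>N\<in>{N\<in>HM. valid k N}. \<Sum>M\<in>(\<lambda>\<sigma>. N \<union> pend \<sigma> (Aset k N)) ` Pi\<^sub>E (Aset k N) (\<lambda>i. {..<k i}). g M)"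
    unfolding MM_eq
  proof (rule sum.UNION_disjoint[OF fin])
    show "\<forall>N\<in>{N \<in> HM. valid k N}. finite ((\<lambda>\<sigma>. N \<union> pend \<sigma> (Aset k N)) ` Pi\<^sub>E (Aset k N) (\<lambda>i. {..<k i}))"
      using Aset_finite by (auto intro!: finite_PiE)
  next
    show "\<forall>N1\<in>{N \<in> HM. valid k N}. \<forall>N2\<in>{N \<in> HM. valid k N}. N1 \<noteq> N2 \<longrightarrow>
      (\<lambda>\<sigma>. N1 \<union> pend \<sigma> (Aset k N1)) ` Pi\<^sub>E (Aset k N1) (\<lambda>i. {..<k i}) \<inter>
      (\<lambda>\<sigma>. N2 \<union> pend \<sigma> (Aset k N2)) ` Pi\<^sub>E (Aset k N2) (\<lambda>i. {..<k i}) = {}"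
    proof (intro ballI impI)
      fix N1 N2 assume N: "N1 \<in> {N \<in> HM. valid k N}" "N2 \<in> {N \<in> HM. valid k N}" "N1 \<noteq> N2"
      have r: "(N \<union> pend \<sigma> A) \<inter> H_edges = N" if "N \<in> HM" for N \<sigma> A
        using pend_H[of \<sigma> A] HM_sub[OF that] by blast
      show "(\<lambda>\<sigma>. N1 \<union> pend \<sigma> (Aset k N1)) ` Pi\<^sub>E (Aset k N1) (\<lambda>i. {..<k i}) \<inter>
        (\<lambda>\<sigma>. N2 \<union> pend \<sigma> (Aset k N2)) ` Pi\<^sub>E (Aset k N2) (\<lambda>i. {..<k i}) = {}"
      proof (rule equals0I)
        fix M assume "M \<in> (\<lambda>\<sigma>. N1 \<union> pend \<sigma> (Aset k N1)) ` Pi\<^sub>E (Aset k N1) (\<lambda>i. {..<k i}) \<inter>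
        (\<lambda>\<sigma>. N2 \<union> pend \<sigma> (Aset k N2)) ` Pi\<^sub>E (Aset k N2) (\<lambda>i. {..<k i})"
        then obtain \<sigma> \<sigma>' where "M = N1 \<union> pend \<sigma> (Aset k N1)" "M = N2 \<union> pend \<sigma>' (Aset k N2)" by blast
        hence "N1 = N2" using r[of N1 \<sigma> "Aset k N1"] r[of N2 \<sigma>' "Aset k N2"] N by simp
        thus False using N by simp
      qed
    qed
  qed
  also have "\<dots> = (\<Sum>N\<in>{N\<in>HM. valid k N}. \<Sum>\<sigma>\<in>Pi\<^sub>E (Aset k N) (\<lambda>i. {..<k i}). g (N \<union> pend \<sigma> (Aset k N)))"
    by (rule sum.cong[OF refl]) (subst sum.reindex[OF F_inj], auto)
  finally show ?thesis .
qed

lemma card_F: "N \<in> HM \<Longrightarrow> card (N \<union> pend \<sigma> (Aset k N)) = card N + card (Aset k N)"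
proof -
  assume N: "N \<in> HM"
  have fN: "finite N" using HM_sub[OF N] finite_subset by (auto simp: H_edges_def)
  have "card (pend \<sigma> (Aset k N)) = card (Aset k N)"
    unfolding pend_def by (rule card_image) (auto intro: inj_onI simp: doubleton_eq_iff)
  moreover have "N \<inter> pend \<sigma> (Aset k N) = {}" using pend_H[of \<sigma> "Aset k N"] HM_sub[OF N] by blast
  ultimately show ?thesis using fN Aset_finite
    by (simp add: card_Un_disjoint pend_def)
qed

lemma count_MM:
  "real (card {M. maximal_matching (pendant_graph k) M}) =
   (\<Sum>N\<in>{N\<in>HM. valid k N}. real (\<Prod>i\<in>Aset k N. k i))"
proof -
  have "real (card {M. maximal_matching (pendant_graph k) M}) = (\<Sum>M\<in>{M. maximal_matching (pendant_graph k) M}. 1)"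
    by simp
  also have "\<dots> = (\<Sum>N\<in>{N\<in>HM. valid k N}. real (card (Pi\<^sub>E (Aset k N) (\<lambda>i. {..<k i}))))"
    unfolding sum_MM by simp
  also have "\<dots> = (\<Sum>N\<in>{N\<in>HM. valid k N}. real (\<Prod>i\<in>Aset k N. k i))"
    by (simp add: card_PiE Aset_finite)
  finally show ?thesis .
qed

lemma total_MM:
  "(\<Sum>M\<in>{M. maximal_matching (pendant_graph k) M}. real (card M)) =
   (\<Sum>N\<in>{N\<in>HM. valid k N}. real (\<Prod>i\<in>Aset k N. k i) * real (card N + card (Aset k N)))"
  unfolding sum_MM
  by (rule sum.cong[OF refl]) (simp add: card_F card_PiE Aset_finite)


definition HL :: "vtx set set list" where
  "HL = [{}, {{Core 0, Core 1}}, {{Core 0, Core 2}}, {{Core 1, Core 2}}, {{Core 0, Core 3}}, {{Core 0, Core 4}}, {{Core 3, Core 4}}, {{Core 3, Core 4}, {Core 1, Core 2}}, {{Core 0, Core 3}, {Core 1, Core 2}}, {{Core 0, Core 4}, {Core 1, Core 2}}, {{Core 3, Core 4}, {Core 0, Core 1}}, {{Core 3, Core 4}, {Core 0, Core 2}}]"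
lemma HL_distinct: "distinct HL" unfolding HL_def by (simp add: doubleton_eq_iff)

lemma ne_lem: "x \<in> A \<Longrightarrow> x \<in> B \<Longrightarrow> A \<inter> B \<noteq> {}" by blast

lemma HM_eq: "HM = set HL"
proof
  show "set HL \<subseteq> HM" by (simp add: HL_def HM_def matching_def H_edges_def)
next
  show "HM \<subseteq> set HL"
  proof
    fix N assume "N \<in> HM"
    hence sub: "N \<subseteq> H_edges" and dis: "\<And>e1 e2. e1\<in>N \<Longrightarrow> e2\<in>N \<Longrightarrow> e1\<noteq>e2 \<Longrightarrow> e1\<inter>e2={}"
      by (auto simp: HM_def matching_def)
    have x1: "\<not> ({Core 0, Core 1} \<in> N \<and> {Core 0, Core 2} \<in> N)" using dis[of "{Core 0, Core 1}" "{Core 0, Core 2}"] by (simp add: ne_lem[of "Core 0"] doubleton_eq_iff, blast)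
    have x2: "\<not> ({Core 0, Core 1} \<in> N \<and> {Core 1, Core 2} \<in> N)" using dis[of "{Core 0, Core 1}" "{Core 1, Core 2}"] by (simp add: ne_lem[of "Core 1"] doubleton_eq_iff, blast)
    have x3: "\<not> ({Core 0, Core 1} \<in> N \<and> {Core 0, Core 3} \<in> N)" using dis[of "{Core 0, Core 1}" "{Core 0, Core 3}"] by (simp add: ne_lem[of "Core 0"] doubleton_eq_iff, blast)
    have x4: "\<not> ({Core 0, Core 1} \<in> N \<and> {Core 0, Core 4} \<in> N)" using dis[of "{Core 0, Core 1}" "{Core 0, Core 4}"] by (simp add: ne_lem[of "Core 0"] doubleton_eq_iff, blast)
    have x5: "\<not> ({Core 0, Core 2} \<in> N \<and> {Core 1, Core 2} \<in> N)" using dis[of "{Core 0, Core 2}" "{Core 1, Core 2}"] by (simp add: ne_lem[of "Core 2"] doubleton_eq_iff, blast)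
    have x6: "\<not> ({Core 0, Core 2} \<in> N \<and> {Core 0, Core 3} \<in> N)" using dis[of "{Core 0, Core 2}" "{Core 0, Core 3}"] by (simp add: ne_lem[of "Core 0"] doubleton_eq_iff, blast)
    have x7: "\<not> ({Core 0, Core 2} \<in> N \<and> {Core 0, Core 4} \<in> N)" using dis[of "{Core 0, Core 2}" "{Core 0, Core 4}"] by (simp add: ne_lem[of "Core 0"] doubleton_eq_iff, blast)
    have x8: "\<not> ({Core 0, Core 3} \<in> N \<and> {Core 0, Core 4} \<in> N)" using dis[of "{Core 0, Core 3}" "{Core 0, Core 4}"] by (simp add: ne_lem[of "Core 0"] doubleton_eq_iff, blast)
    have x9: "\<not> ({Core 0, Core 3} \<in> N \<and> {Core 3, Core 4} \<in> N)" using dis[of "{Core 0, Core 3}" "{Core 3, Core 4}"] by (simp add: ne_lem[of "Core 3"] doubleton_eq_iff, blast)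
    have x10: "\<not> ({Core 0, Core 4} \<in> N \<and> {Core 3, Core 4} \<in> N)" using dis[of "{Core 0, Core 4}" "{Core 3, Core 4}"] by (simp add: ne_lem[of "Core 4"] doubleton_eq_iff, blast)
    have nn: "N = (if {Core 0, Core 1} \<in> N then {{Core 0, Core 1}} else {}) \<union> (if {Core 0, Core 2} \<in> N then {{Core 0, Core 2}} else {}) \<union> (if {Core 1, Core 2} \<in> N then {{Core 1, Core 2}} else {}) \<union> (if {Core 0, Core 3} \<in> N then {{Core 0, Core 3}} else {}) \<union> (if {Core 0, Core 4} \<in> N then {{Core 0, Core 4}} else {}) \<union> (if {Core 3, Core 4} \<in> N then {{Core 3, Core 4}} else {})"
    proof (rule set_eqI)
      fix e
      show "e \<in> N \<longleftrightarrow> e \<in> ((if {Core 0, Core 1} \<in> N then {{Core 0, Core 1}} else {}) \<union> (if {Core 0, Core 2} \<in> N then {{Core 0, Core 2}} else {}) \<union> (if {Core 1, Core 2} \<in> N then {{Core 1, Core 2}} else {}) \<union> (if {Core 0, Core 3} \<in> N then {{Core 0, Core 3}} else {}) \<union> (if {Core 0, Core 4} \<in> N then {{Core 0, Core 4}} else {}) \<union> (if {Core 3, Core 4} \<in> N then {{Core 3, Core 4}} else {}))"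
      proof
        assume eN: "e \<in> N"
        moreover have "e \<in> H_edges" using sub eN by blast
        ultimately show "e \<in> ((if {Core 0, Core 1} \<in> N then {{Core 0, Core 1}} else {}) \<union> (if {Core 0, Core 2} \<in> N then {{Core 0, Core 2}} else {}) \<union> (if {Core 1, Core 2} \<in> N then {{Core 1, Core 2}} else {}) \<union> (if {Core 0, Core 3} \<in> N then {{Core 0, Core 3}} else {}) \<union> (if {Core 0, Core 4} \<in> N then {{Core 0, Core 4}} else {}) \<union> (if {Core 3, Core 4} \<in> N then {{Core 3, Core 4}} else {}))" unfolding H_edges_def
          by (simp only: insert_iff empty_iff) (elim disjE; simp)
      next
        assume "e \<in> ((if {Core 0, Core 1} \<in> N then {{Core 0, Core 1}} else {}) \<union> (if {Core 0, Core 2} \<in> N then {{Core 0, Core 2}} else {}) \<union> (if {Core 1, Core 2} \<in> N then {{Core 1, Core 2}} else {}) \<union> (if {Core 0, Core 3} \<in> N then {{Core 0, Core 3}} else {}) \<union> (if {Core 0, Core 4} \<in> N then {{Core 0, Core 4}} else {}) \<union> (if {Core 3, Core 4} \<in> N then {{Core 3, Core 4}} else {}))" thus "e \<in> N" by (simp split: if_splits; elim disjE; simp)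
      qed
    qed
    have r: "((if {Core 0, Core 1} \<in> N then {{Core 0, Core 1}} else {}) \<union> (if {Core 0, Core 2} \<in> N then {{Core 0, Core 2}} else {}) \<union> (if {Core 1, Core 2} \<in> N then {{Core 1, Core 2}} else {}) \<union> (if {Core 0, Core 3} \<in> N then {{Core 0, Core 3}} else {}) \<union> (if {Core 0, Core 4} \<in> N then {{Core 0, Core 4}} else {}) \<union> (if {Core 3, Core 4} \<in> N then {{Core 3, Core 4}} else {})) \<in> set HL" using x1 x2 x3 x4 x5 x6 x7 x8 x9 x10 unfolding HL_def
      by (cases "{Core 0, Core 1} \<in> N"; cases "{Core 0, Core 2} \<in> N"; cases "{Core 1, Core 2} \<in> N"; cases "{Core 0, Core 3} \<in> N"; cases "{Core 0, Core 4} \<in> N"; cases "{Core 3, Core 4} \<in> N"; simp)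
    show "N \<in> set HL" by (subst nn) (rule r)
  qed
qed


definition Cn :: "(nat \<Rightarrow> nat) \<Rightarrow> nat" where
  "Cn k = sum_list (map (\<lambda>N. if valid k N then (\<Prod>i\<in>Aset k N. k i) else 0) HL)"
definition Sn :: "(nat \<Rightarrow> nat) \<Rightarrow> nat" where
  "Sn k = sum_list (map (\<lambda>N. if valid k N then (\<Prod>i\<in>Aset k N. k i) * (card N + card (Aset k N)) else 0) HL)"

lemma sum_HMv: "(\<Sum>N\<in>{N\<in>HM. valid k N}. f N) = sum_list (map (\<lambda>N. if valid k N then f N else 0) HL)"
proof -
  have "(\<Sum>N\<in>{N\<in>HM. valid k N}. f N) = (\<Sum>N\<in>set HL. if valid k N then f N else 0)"
    unfolding HM_eq by (rule sum.inter_filter) simp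
  also have "\<dots> = sum_list (map (\<lambda>N. if valid k N then f N else 0) HL)"
    by (rule sum.distinct_set_conv_list[OF HL_distinct])
  finally show ?thesis .
qed

lemma rsl: "real (sum_list (map f xs)) = sum_list (map (\<lambda>x. real (f x)) xs)"
  by (induct xs) auto

lemma avm_eq: "avm (pendant_graph k) = real (Sn k) / real (Cn k)"
proof -
  have c: "real (card {M. maximal_matching (pendant_graph k) M}) = real (Cn k)"
    unfolding count_MM sum_HMv Cn_def
    by (simp add: rsl o_def, intro arg_cong[where f=sum_list] map_cong) auto
  have s: "(\<Sum>M\<in>{M. maximal_matching (pendant_graph k) M}. real (card M)) = real (Sn k)"
    unfolding total_MM sum_HMv Sn_def
    by (simp add: rsl o_def, intro arg_cong[where f=sum_list] map_cong) auto
  show ?thesis unfolding avm_def c s ..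
qed

lemma Aset_eq: "Aset k N = {i\<in>{0,1,2,3,4}. Core i \<notin> \<Union>N \<and> 0 < k i}"
  by (auto simp: Aset_def)

lemma prod_A: "(\<Prod>i\<in>Aset k N. k i) = (\<Prod>i\<in>{0,1,2,3,4}. if Core i \<notin> \<Union>N \<and> 0 < k i then k i else 1)"
  unfolding Aset_eq by (rule prod.inter_filter) simp

lemma card_A: "card (Aset k N) = (\<Sum>i\<in>{0,1,2,3,4}. if Core i \<notin> \<Union>N \<and> 0 < k i then 1 else 0)"
proof -
  have "card (Aset k N) = (\<Sum>i\<in>Aset k N. 1)" by simp
  also have "\<dots> = (\<Sum>i\<in>{0,1,2,3,4}. if Core i \<notin> \<Union>N \<and> 0 < k i then 1 else 0)"
    unfolding Aset_eq by (rule sum.inter_filter) simp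
  finally show ?thesis .
qed

lemma R33_vals:
  assumes "m > 0"
  shows "Cn (\<lambda>i. if i = 1 then m else 0) = 3*m+4 \<and> Sn (\<lambda>i. if i = 1 then m else 0) = 7*m+8"
  using assms
  by (simp add: Cn_def Sn_def HL_def valid_def H_edges_def posv_def prod_A card_A doubleton_eq_iff)

lemma G_test:
  assumes "k 0 = Suc a" "k 1 = Suc b" "k 2 = 0" "k 3 = 0" "k 4 = 0"
  shows "0 < Cn k \<and> 7 * Cn k < 3 * Sn k"
  using assms
  by (simp add: Cn_def Sn_def HL_def valid_def H_edges_def posv_def prod_A card_A doubleton_eq_iff)

lemma G_ineq:
  assumes "0 < k 0" "k 1 \<noteq> 0 \<or> k 2 \<noteq> 0 \<or> k 3 \<noteq> 0 \<or> k 4 \<noteq> 0"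
  shows "0 < Cn k \<and> 7 * Cn k < 3 * Sn k"
proof -
  obtain a where a: "k 0 = Suc a" using assms(1) by (cases "k 0") auto
  show ?thesis using assms(2) a
    by (cases "k 1"; cases "k 2"; cases "k 3"; cases "k 4";
        simp add: Cn_def Sn_def HL_def valid_def H_edges_def posv_def prod_A card_A doubleton_eq_iff)
qed


theorem lemma3p4:
  fixes k :: "nat \<Rightarrow> nat" and a d n :: nat
  assumes "k 0 = a" and "a \<ge> 1"
    and "card {i \<in> {1..4}. k i > 0} = d" and "1 \<le> d" and "d \<le> 4"
    and "n = 5 + (\<Sum>i<5. k i)"
  shows "avm (pendant_graph k) > avm (R33 n)"
proof -
  have k0: "0 < k 0" using assms(1,2) by simp
  have "{i \<in> {1..4}. k i > 0} \<noteq> {}"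
  proof
    assume "{i \<in> {1..4}. k i > 0} = {}"
    hence "d = card ({}::nat set)" using assms(3) by metis
    hence "d = 0" by simp
    thus False using assms(4) by simp
  qed
  then obtain i where i: "i \<in> {1..4}" "0 < k i" by blast
  hence "i = 1 \<or> i = 2 \<or> i = 3 \<or> i = 4" by auto
  hence disj: "k 1 \<noteq> 0 \<or> k 2 \<noteq> 0 \<or> k 3 \<noteq> 0 \<or> k 4 \<noteq> 0" using i by auto
  from G_ineq[OF k0 disj] have G: "0 < Cn k" "7 * Cn k < 3 * Sn k" by auto
  define m where "m = n - 5"
  have "k 0 \<le> (\<Sum>i<5. k i)" by (rule member_le_sum) auto
  hence m0: "0 < m" using assms(6) k0 m_def by simp
  have R: "avm (R33 n) = real (7*m+8) / real (3*m+4)"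
    unfolding R33_def m_def[symmetric] avm_eq using R33_vals[OF m0] by simp
  have r: "avm (R33 n) < 7/3" unfolding R by (simp add: field_simps)
  have G1: "0 < real (Cn k)" using G by simp
  have G2: "7 * real (Cn k) < 3 * real (Sn k)" using G(2) by (simp only: of_nat_less_iff[symmetric] of_nat_mult of_nat_numeral)
  have "7/3 < avm (pendant_graph k)" unfolding avm_eq using G1 G2 by (simp add: field_simps)
  thus ?thesis using r by linarith
qed

end
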